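(* Let $X$ be a real Banach space and $T:X\rightrightarrows X^*$ a monotone operator whose range $R_T$ is bounded. Consider the conditions: (i) for every $x^*\notin\overline{R_T}$, $\sup\left\{\frac{\langle x^*-z^*,z\rangle}{\|x^*-z^*\|}:(z,z^* )\in G(T)\right\}=\infty$; (ii) $\pi_2\,\mathrm{dom}\,\varphi_T\subset\overline{R_T}$; (iii) $\overline{R_T}=\overline{\mathrm{co}\,R_T}=\overline{\pi_2\,\mathrm{dom}\,\varphi_T}$; (iv) $\overline{R_T}$ is convex; (i$'$) for every $x^*\notin\overline{R_T}^{w^*}$, $\sup\left\{\frac{\langle x^*-z^*,z\rangle}{\|x^*-z^*\|}:(z,z^* )\in G(T)\right\}=\infty$; (ii$'$) $\pi_2\,\mathrm{dom}\,\varphi_T\subset\overline{R_T}^{w^*}$; (iii$'$) $\overline{R_T}^{w^*}=\overline{\mathrm{co}\,R_T}^{w^*}=\overline{\pi_2\,\mathrm{dom}\,\varphi_T}^{w^*}$; (iv$'$) $\overline{R_T}^{w^*}$ is convex. Then (i), (ii), (iii) are equivalent; (iii) $\Rightarrow$ (iv) $\Rightarrow$ (iv$'$); (i) $\Rightarrow$ (i$'$); (ii) $\Rightarrow$ (ii$'$) $\Rightarrow$ (iii$'$) $\Rightarrow$ (i$'$); and (iii$'$) $\Rightarrow$ (iv$'$). If moreover $T$ is maximal monotone, then (iv$'$) $\Rightarrow$ (i$'$).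
   Context: $X$ is a real Banach space with topological dual $X^*$ and pairing $\langle x,x^*\rangle$. A (multivalued) operator $T:X\rightrightarrows X^*$ has graph $G(T)=\{(x,x^* ):x^*\in T(x)\}$, domain $D_T=\{x:T(x)\neq\emptyset\}$ and range $R_T=\bigcup_{x}T(x)$. $T$ is monotone if $\langle x^*-y^*,x-y\rangle\ge0$ for all $(x,x^* ),(y,y^* )\in G(T)$; it is maximal monotone if no monotone operator has a graph strictly containing $G(T)$. The Fitzpatrick function of a monotone $T$ is $\varphi_T(x,x^* )=\sup\{\langle x^*-z^*,z-x\rangle:(z,z^* )\in G(T)\}+\langle x^*,x\rangle$, $\mathrm{dom}\,\varphi_T=\{(x,x^* ):\varphi_T(x,x^* )<\infty\}$, and $\pi_2:X\times X^*\to X^*$ is the projection. $\mathrm{co}$ denotes convex hull, bars denote norm closure, and $\overline{A}^{w^*}$ denotes weak$^*$ closure in $X^*$. *)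

theory Defs
  imports "HOL-Analysis.Analysis"
begin

text \<open>The dual space X* of a real Banach space X is modelled as the type
  of bounded linear functionals X \<rightarrow> real (bounded linear), with the operator norm.
  A multivalued operator T is represented by its graph G(T).\<close>

definition monotone_op :: "('a::real_normed_vector \<times> ('a \<Rightarrow>\<^sub>L real)) set \<Rightarrow> bool" where
  "monotone_op G \<longleftrightarrow>
     (\<forall>(x, xs)\<in>G. \<forall>(y, ys)\<in>G. blinfun_apply (xs - ys) (x - y) \<ge> 0)"

definition maximal_monotone_op :: "('a::real_normed_vector \<times> ('a \<Rightarrow>\<^sub>L real)) set \<Rightarrow> bool" where
  "maximal_monotone_op G \<longleftrightarrow>
     monotone_op G \<and> (\<forall>G'. monotone_op G' \<and> G \<subseteq> G' \<longrightarrow> G' = G)"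

definition fitzpatrick :: "('a::real_normed_vector \<times> ('a \<Rightarrow>\<^sub>L real)) set \<Rightarrow> 'a \<times> ('a \<Rightarrow>\<^sub>L real) \<Rightarrow> ereal" where
  "fitzpatrick G = (\<lambda>(x, xs).
     (SUP (z, zs)\<in>G. ereal (blinfun_apply (xs - zs) (z - x))) + ereal (blinfun_apply xs x))"

definition fitz_dom :: "('a::real_normed_vector \<times> ('a \<Rightarrow>\<^sub>L real)) set \<Rightarrow> ('a \<times> ('a \<Rightarrow>\<^sub>L real)) set" where
  "fitz_dom G = {p. fitzpatrick G p < \<infinity>}"

definition weak_star_open :: "('a::real_normed_vector \<Rightarrow>\<^sub>L real) set \<Rightarrow> bool" where
  "weak_star_open U \<longleftrightarrow>
     (\<forall>f\<in>U. \<exists>F e. finite F \<and> e > 0 \<and>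
        {g. \<forall>x\<in>F. \<bar>blinfun_apply g x - blinfun_apply f x\<bar> < e} \<subseteq> U)"

definition weak_star_topology :: "('a::real_normed_vector \<Rightarrow>\<^sub>L real) topology" where
  "weak_star_topology = topology weak_star_open"

definition weak_star_closure :: "('a::real_normed_vector \<Rightarrow>\<^sub>L real) set \<Rightarrow> ('a \<Rightarrow>\<^sub>L real) set" where
  "weak_star_closure S = weak_star_topology closure_of S"

lemma istopology_weak_star_open: "istopology weak_star_open"
  unfolding istopology_def
proof (intro conjI allI impI)
  fix S T :: "('a \<Rightarrow>\<^sub>L real) set"
  assume S: "weak_star_open S" and T: "weak_star_open T"
  show "weak_star_open (S \<inter> T)"
    unfolding weak_star_open_def
  proof
    fix f assume f: "f \<in> S \<inter> T"
    obtain F1 e1 where 1: "finite F1" "e1 > 0"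
      "{g. \<forall>x\<in>F1. \<bar>blinfun_apply g x - blinfun_apply f x\<bar> < e1} \<subseteq> S"
      using S f unfolding weak_star_open_def by blast
    obtain F2 e2 where 2: "finite F2" "e2 > 0"
      "{g. \<forall>x\<in>F2. \<bar>blinfun_apply g x - blinfun_apply f x\<bar> < e2} \<subseteq> T"
      using T f unfolding weak_star_open_def by blast
    show "\<exists>F e. finite F \<and> e > 0 \<and>
        {g. \<forall>x\<in>F. \<bar>blinfun_apply g x - blinfun_apply f x\<bar> < e} \<subseteq> S \<inter> T"
      apply (rule exI[of _ "F1 \<union> F2"], rule exI[of _ "min e1 e2"])
      using 1 2 by fastforce
  qed
next
  fix K :: "('a \<Rightarrow>\<^sub>L real) set set"
  assume "\<forall>S\<in>K. weak_star_open S"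
  then show "weak_star_open (\<Union>K)"
    unfolding weak_star_open_def by (meson Sup_upper2 UnionE)
qed

end

theory Submission
  imports Defs
begin


lemma ws_openin: "openin weak_star_topology = weak_star_open"
  unfolding weak_star_topology_def by (rule topology_inverse'[OF istopology_weak_star_open])

lemma ws_topspace: "topspace weak_star_topology = UNIV"
proof -
  have "weak_star_open (UNIV :: ('a::real_normed_vector \<Rightarrow>\<^sub>L real) set)"
    unfolding weak_star_open_def by (intro ballI exI[of _ "{}"] exI[of _ 1]) auto
  thus ?thesis unfolding topspace_def ws_openin by blast
qed

lemma ws_basic_open:
  fixes f :: "'a::real_normed_vector \<Rightarrow>\<^sub>L real"
  assumes "finite F" "e > 0"
  shows "weak_star_open {g. \<forall>x\<in>F. \<bar>blinfun_apply g x - blinfun_apply f x\<bar> < e}"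
  unfolding weak_star_open_def
proof
  fix g assume g: "g \<in> {g. \<forall>x\<in>F. \<bar>blinfun_apply g x - blinfun_apply f x\<bar> < e}"
  define m where "m = Max (insert 0 ((\<lambda>x. \<bar>blinfun_apply g x - blinfun_apply f x\<bar>) ` F))"
  have mlt: "m < e" unfolding m_def using assms g by (subst Max_less_iff) auto
  have mge: "\<And>x. x \<in> F \<Longrightarrow> \<bar>blinfun_apply g x - blinfun_apply f x\<bar> \<le> m"
    unfolding m_def using assms by (intro Max_ge) auto
  show "\<exists>F' e'. finite F' \<and> e' > 0 \<and> {h. \<forall>x\<in>F'. \<bar>blinfun_apply h x - blinfun_apply g x\<bar> < e'}
      \<subseteq> {g. \<forall>x\<in>F. \<bar>blinfun_apply g x - blinfun_apply f x\<bar> < e}"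
  proof (intro exI conjI)
    show "finite F" by fact
    show "e - m > 0" using mlt by simp
    show "{h. \<forall>x\<in>F. \<bar>blinfun_apply h x - blinfun_apply g x\<bar> < e - m}
      \<subseteq> {g. \<forall>x\<in>F. \<bar>blinfun_apply g x - blinfun_apply f x\<bar> < e}"
    proof safe
      fix h x assume h: "\<forall>x\<in>F. \<bar>blinfun_apply h x - blinfun_apply g x\<bar> < e - m" and x: "x \<in> F"
      have a: "\<bar>blinfun_apply h x - blinfun_apply g x\<bar> < e - m" using h x by blast
      from a mge[OF x] show "\<bar>blinfun_apply h x - blinfun_apply f x\<bar> < e" by (auto simp: abs_less_iff abs_le_iff)
    qed
  qed
qed

lemma ws_closure_iff:
  fixes f :: "'a::real_normed_vector \<Rightarrow>\<^sub>L real"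
  shows "f \<in> weak_star_closure S \<longleftrightarrow>
    (\<forall>F e. finite F \<and> e > 0 \<longrightarrow> (\<exists>s\<in>S. \<forall>x\<in>F. \<bar>blinfun_apply s x - blinfun_apply f x\<bar> < e))"
proof
  assume f: "f \<in> weak_star_closure S"
  show "\<forall>F e. finite F \<and> e > 0 \<longrightarrow> (\<exists>s\<in>S. \<forall>x\<in>F. \<bar>blinfun_apply s x - blinfun_apply f x\<bar> < e)"
  proof (intro allI impI)
    fix F :: "'a set" and e :: real assume "finite F \<and> e > 0"
    then have "openin weak_star_topology {g. \<forall>x\<in>F. \<bar>blinfun_apply g x - blinfun_apply f x\<bar> < e}"
      unfolding ws_openin by (intro ws_basic_open) auto
    moreover have "f \<in> {g. \<forall>x\<in>F. \<bar>blinfun_apply g x - blinfun_apply f x\<bar> < e}"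
      using \<open>finite F \<and> e > 0\<close> by simp
    ultimately show "\<exists>s\<in>S. \<forall>x\<in>F. \<bar>blinfun_apply s x - blinfun_apply f x\<bar> < e"
      using f unfolding weak_star_closure_def in_closure_of by (elim conjE allE[where x="{g. \<forall>x\<in>F. \<bar>blinfun_apply g x - blinfun_apply f x\<bar> < e}"]) auto
  qed
next
  assume H: "\<forall>F e. finite F \<and> e > 0 \<longrightarrow> (\<exists>s\<in>S. \<forall>x\<in>F. \<bar>blinfun_apply s x - blinfun_apply f x\<bar> < e)"
  show "f \<in> weak_star_closure S"
    unfolding weak_star_closure_def in_closure_of ws_topspace ws_openin
  proof (intro conjI allI impI)
    fix T assume "f \<in> T \<and> weak_star_open T"
    then obtain F e where "finite F" "e > 0"
      "{g. \<forall>x\<in>F. \<bar>blinfun_apply g x - blinfun_apply f x\<bar> < e} \<subseteq> T"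
      unfolding weak_star_open_def by blast
    then show "\<exists>y. y \<in> S \<and> y \<in> T" using H by blast
  qed simp
qed

lemma ws_subset: "S \<subseteq> weak_star_closure S"
  unfolding weak_star_closure_def by (rule closure_of_subset) (simp add: ws_topspace)

lemma ws_mono: "S \<subseteq> T \<Longrightarrow> weak_star_closure S \<subseteq> weak_star_closure T"
  unfolding weak_star_closure_def by (rule closure_of_mono)

lemma ws_idem: "weak_star_closure (weak_star_closure S) = weak_star_closure S"
  unfolding weak_star_closure_def by simp

lemma closure_sub_ws:
  fixes S :: "('a::real_normed_vector \<Rightarrow>\<^sub>L real) set"
  shows "closure S \<subseteq> weak_star_closure S"
proof
  fix f assume f: "f \<in> closure S"
  show "f \<in> weak_star_closure S" unfolding ws_closure_iff
  proof (intro allI impI)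
    fix F :: "'a set" and e :: real assume Fe: "finite F \<and> e > 0"
    define B where "B = (\<Sum>x\<in>F. norm x) + 1"
    have B: "B > 0" "\<And>x. x \<in> F \<Longrightarrow> norm x \<le> B"
      unfolding B_def using Fe by (auto intro!: add_nonneg_pos sum_nonneg member_le_sum[where f=norm, THEN order.trans])
    obtain s where s: "s \<in> S" "dist s f < e / B"
      using f Fe B(1) unfolding closure_approachable by (meson divide_pos_pos)
    show "\<exists>s\<in>S. \<forall>x\<in>F. \<bar>blinfun_apply s x - blinfun_apply f x\<bar> < e"
    proof (intro bexI ballI)
      fix x assume x: "x \<in> F"
      have "\<bar>blinfun_apply s x - blinfun_apply f x\<bar> = \<bar>blinfun_apply (s - f) x\<bar>"
        by (simp add: blinfun.diff_left)
      also have "\<dots> \<le> norm (s - f) * norm x" using norm_blinfun[of "s - f" x] by simp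
      also have "\<dots> \<le> norm (s - f) * B" using B(2)[OF x] by (simp add: mult_left_mono)
      also have "\<dots> < e" using s(2) B(1) by (simp add: dist_norm pos_less_divide_eq)
      finally show "\<bar>blinfun_apply s x - blinfun_apply f x\<bar> < e" .
    qed (rule s(1))
  qed
qed

lemma ws_convex:
  fixes S :: "('a::real_normed_vector \<Rightarrow>\<^sub>L real) set"
  assumes "convex S"
  shows "convex (weak_star_closure S)"
proof (rule convexI)
  fix f g :: "'a \<Rightarrow>\<^sub>L real" and u v :: real
  assume f: "f \<in> weak_star_closure S" and g: "g \<in> weak_star_closure S"
    and uv: "0 \<le> u" "0 \<le> v" "u + v = 1"
  show "u *\<^sub>R f + v *\<^sub>R g \<in> weak_star_closure S" unfolding ws_closure_iff
  proof (intro allI impI)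
    fix F :: "'a set" and e :: real assume Fe: "finite F \<and> e > 0"
    obtain s where s: "s \<in> S" "\<forall>x\<in>F. \<bar>blinfun_apply s x - blinfun_apply f x\<bar> < e"
      using f Fe unfolding ws_closure_iff by blast
    obtain t where t: "t \<in> S" "\<forall>x\<in>F. \<bar>blinfun_apply t x - blinfun_apply g x\<bar> < e"
      using g Fe unfolding ws_closure_iff by blast
    show "\<exists>s\<in>S. \<forall>x\<in>F. \<bar>blinfun_apply s x - blinfun_apply (u *\<^sub>R f + v *\<^sub>R g) x\<bar> < e"
    proof (intro bexI ballI)
      fix x assume x: "x \<in> F"
      define a where "a = \<bar>blinfun_apply s x - blinfun_apply f x\<bar>"
      define b where "b = \<bar>blinfun_apply t x - blinfun_apply g x\<bar>"
      have ab: "a < e" "b < e" using s(2) t(2) x unfolding a_def b_def by auto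
      have "\<bar>blinfun_apply (u *\<^sub>R s + v *\<^sub>R t) x - blinfun_apply (u *\<^sub>R f + v *\<^sub>R g) x\<bar>
          = \<bar>u * (blinfun_apply s x - blinfun_apply f x) + v * (blinfun_apply t x - blinfun_apply g x)\<bar>"
        by (simp add: blinfun.add_left blinfun.scaleR_left algebra_simps)
      also have "\<dots> \<le> u * a + v * b"
        unfolding a_def b_def using uv by (simp add: abs_mult abs_triangle_ineq[THEN order.trans])
      also have "\<dots> \<le> u * max a b + v * max a b"
        using uv by (intro add_mono mult_left_mono) auto
      also have "\<dots> = max a b"
        using uv by (simp flip: distrib_right)
      also have "\<dots> < e" using ab by simp
      finally show "\<bar>blinfun_apply (u *\<^sub>R s + v *\<^sub>R t) x - blinfun_apply (u *\<^sub>R f + v *\<^sub>R g) x\<bar> < e" .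
    qed (use s t uv assms in \<open>auto intro: convexD\<close>)
  qed
qed



lemma fitz_dom_iff:
  "(x, xs) \<in> fitz_dom G \<longleftrightarrow> (\<exists>B. \<forall>(z, zs)\<in>G. blinfun_apply (xs - zs) (z - x) \<le> B)"
proof -
  let ?S = "SUP (z, zs)\<in>G. ereal (blinfun_apply (xs - zs) (z - x))"
  have "(x, xs) \<in> fitz_dom G \<longleftrightarrow> ?S + ereal (blinfun_apply xs x) < \<infinity>"
    unfolding fitz_dom_def fitzpatrick_def by simp
  also have "\<dots> \<longleftrightarrow> ?S \<noteq> \<infinity>" by (cases ?S) auto
  also have "\<dots> \<longleftrightarrow> (\<exists>B. \<forall>(z, zs)\<in>G. blinfun_apply (xs - zs) (z - x) \<le> B)"
  proof
    assume "?S \<noteq> \<infinity>"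
    then have "?S < \<infinity>" by (simp add: less_top)
    show "\<exists>B. \<forall>(z, zs)\<in>G. blinfun_apply (xs - zs) (z - x) \<le> B"
    proof (cases ?S)
      case (real r)
      have "\<forall>(z, zs)\<in>G. blinfun_apply (xs - zs) (z - x) \<le> r"
      proof (clarify)
        fix z zs assume "(z, zs) \<in> G"
        then have "ereal (blinfun_apply (xs - zs) (z - x)) \<le> ?S"
          by (rule SUP_upper2) simp
        then show "blinfun_apply (xs - zs) (z - x) \<le> r" using real by simp
      qed
      then show ?thesis by blast
    next
      case MInf
      have "\<forall>(z, zs)\<in>G. blinfun_apply (xs - zs) (z - x) \<le> 0"
      proof (clarify)
        fix z zs assume "(z, zs) \<in> G"
        then have "ereal (blinfun_apply (xs - zs) (z - x)) \<le> ?S"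
          by (rule SUP_upper2) simp
        then show "blinfun_apply (xs - zs) (z - x) \<le> 0" using MInf by simp
      qed
      then show ?thesis by blast
    qed (use \<open>?S < \<infinity>\<close> in simp)
  next
    assume "\<exists>B. \<forall>(z, zs)\<in>G. blinfun_apply (xs - zs) (z - x) \<le> B"
    then obtain B where B: "\<forall>(z, zs)\<in>G. blinfun_apply (xs - zs) (z - x) \<le> B" by blast
    have "?S \<le> ereal B" by (rule SUP_least) (use B in auto)
    then show "?S \<noteq> \<infinity>" by auto
  qed
  finally show ?thesis .
qed

lemma ratio_sup_iff:
  fixes G :: "('a::real_normed_vector \<times> ('a \<Rightarrow>\<^sub>L real)) set"
  assumes M: "\<And>zs. zs \<in> snd ` G \<Longrightarrow> norm zs \<le> M"
    and d: "d > 0" "\<And>zs. zs \<in> snd ` G \<Longrightarrow> d \<le> norm (xs - zs)"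
  shows "(SUP (z, zs)\<in>G. ereal (blinfun_apply (xs - zs) z / norm (xs - zs))) = \<infinity>
    \<longleftrightarrow> \<not> (\<exists>B. \<forall>(z, zs)\<in>G. blinfun_apply (xs - zs) z \<le> B)"
proof -
  have "(SUP (z, zs)\<in>G. ereal (blinfun_apply (xs - zs) z / norm (xs - zs))) = \<infinity>
     \<longleftrightarrow> (\<forall>y<top. \<exists>p\<in>G. y < (\<lambda>(z, zs). ereal (blinfun_apply (xs - zs) z / norm (xs - zs))) p)"
    by (simp only: top_ereal_def[symmetric] SUP_eq_top_iff)
  also have "\<dots> \<longleftrightarrow> (\<forall>B. \<exists>(z, zs)\<in>G. B < blinfun_apply (xs - zs) z / norm (xs - zs))"
  proof
    assume H: "\<forall>y<top. \<exists>p\<in>G. y < (\<lambda>(z, zs). ereal (blinfun_apply (xs - zs) z / norm (xs - zs))) p"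
    show "\<forall>B. \<exists>(z, zs)\<in>G. B < blinfun_apply (xs - zs) z / norm (xs - zs)"
    proof
      fix B :: real
      have "ereal B < top" by (simp add: top_ereal_def)
      from H[rule_format, OF this] show "\<exists>(z, zs)\<in>G. B < blinfun_apply (xs - zs) z / norm (xs - zs)"
        by force
    qed
  next
    assume H: "\<forall>B. \<exists>(z, zs)\<in>G. B < blinfun_apply (xs - zs) z / norm (xs - zs)"
    show "\<forall>y<top. \<exists>p\<in>G. y < (\<lambda>(z, zs). ereal (blinfun_apply (xs - zs) z / norm (xs - zs))) p"
    proof (intro allI impI)
      fix y :: ereal assume "y < top"
      then obtain B where yB: "y \<le> ereal B"
        by (cases y) auto
      from H obtain z zs where "(z, zs) \<in> G" "B < blinfun_apply (xs - zs) z / norm (xs - zs)" by blast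
      then show "\<exists>p\<in>G. y < (\<lambda>(z, zs). ereal (blinfun_apply (xs - zs) z / norm (xs - zs))) p"
        using yB by (intro bexI[of _ "(z, zs)"]) (auto intro: order.strict_trans1)
    qed
  qed
  also have "\<dots> \<longleftrightarrow> \<not> (\<exists>B. \<forall>(z, zs)\<in>G. blinfun_apply (xs - zs) z \<le> B)"
  proof
    assume H: "\<forall>B. \<exists>(z, zs)\<in>G. B < blinfun_apply (xs - zs) z / norm (xs - zs)"
    show "\<not> (\<exists>B. \<forall>(z, zs)\<in>G. blinfun_apply (xs - zs) z \<le> B)"
    proof
      assume "\<exists>B. \<forall>(z, zs)\<in>G. blinfun_apply (xs - zs) z \<le> B"
      then obtain B where B: "\<forall>(z, zs)\<in>G. blinfun_apply (xs - zs) z \<le> B" by blast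
      from H obtain z zs where zG: "(z, zs) \<in> G"
        and lt: "\<bar>B\<bar> / d < blinfun_apply (xs - zs) z / norm (xs - zs)" by blast
      have zR: "zs \<in> snd ` G" using zG by force
      have n: "d \<le> norm (xs - zs)" using d(2)[OF zR] .
      have npos: "norm (xs - zs) > 0" using n d(1) by linarith
      have "blinfun_apply (xs - zs) z \<le> \<bar>B\<bar>" using B zG by force
      then have "blinfun_apply (xs - zs) z / norm (xs - zs) \<le> \<bar>B\<bar> / norm (xs - zs)"
        using npos by (simp add: divide_right_mono)
      also have "\<dots> \<le> \<bar>B\<bar> / d" using n d(1) by (simp add: frac_le)
      finally show False using lt by simp
    qed
  next
    assume H: "\<not> (\<exists>B. \<forall>(z, zs)\<in>G. blinfun_apply (xs - zs) z \<le> B)"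
    show "\<forall>B. \<exists>(z, zs)\<in>G. B < blinfun_apply (xs - zs) z / norm (xs - zs)"
    proof
      fix B :: real
      define N where "N = norm xs + max M 0 + 1"
      have Npos: "N > 0" unfolding N_def by (simp add: add_nonneg_pos)
      from H obtain z zs where zG: "(z, zs) \<in> G" and gt: "\<not> blinfun_apply (xs - zs) z \<le> \<bar>B\<bar> * N"
        by blast
      have zR: "zs \<in> snd ` G" using zG by force
      have n: "d \<le> norm (xs - zs)" using d(2)[OF zR] .
      have npos: "norm (xs - zs) > 0" using n d(1) by linarith
      have nN: "norm (xs - zs) \<le> N"
        using norm_triangle_ineq4[of xs zs] M[OF zR] unfolding N_def by linarith
      have g: "\<bar>B\<bar> * N < blinfun_apply (xs - zs) z" using gt by simp
      have "B \<le> \<bar>B\<bar>" by simp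
      also have "\<dots> < blinfun_apply (xs - zs) z / N" using g Npos by (simp add: pos_less_divide_eq)
      also have "\<dots> \<le> blinfun_apply (xs - zs) z / norm (xs - zs)"
      proof -
        have pos: "0 \<le> blinfun_apply (xs - zs) z" using g Npos
          by (smt (verit) mult_nonneg_nonneg abs_ge_zero)
        show ?thesis by (rule divide_left_mono[OF nN pos]) (use Npos npos in simp)
      qed
      finally show "\<exists>(z, zs)\<in>G. B < blinfun_apply (xs - zs) z / norm (xs - zs)" using zG by blast
    qed
  qed
  finally show ?thesis .
qed



lemma sep_lemma:
  fixes K :: "('a::real_normed_vector \<Rightarrow>\<^sub>L real) set" and p :: "'a \<Rightarrow>\<^sub>L real"
  assumes K: "convex K" "K \<noteq> {}" and M: "\<And>c. c \<in> K \<Longrightarrow> norm c \<le> M"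
    and F: "finite F" and e: "e > 0"
    and far: "\<And>c. c \<in> K \<Longrightarrow> \<exists>x\<in>F. e \<le> \<bar>blinfun_apply c x - blinfun_apply p x\<bar>"
  shows "\<exists>w \<delta>. \<delta> > 0 \<and> (\<forall>c\<in>K. blinfun_apply c w \<le> blinfun_apply p w - \<delta>)"
proof -
  define Q where "Q c = (\<Sum>x\<in>F. (blinfun_apply c x - blinfun_apply p x)^2)" for c
  have Qge: "e^2 \<le> Q c" if cK: "c \<in> K" for c
  proof -
    obtain x where x: "x \<in> F" "e \<le> \<bar>blinfun_apply c x - blinfun_apply p x\<bar>" using far[OF cK] by blast
    have "e^2 \<le> (blinfun_apply c x - blinfun_apply p x)^2"
      using x(2) e by (metis abs_of_pos power2_abs power_mono abs_ge_zero order.strict_implies_order)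
    also have "\<dots> \<le> Q c" unfolding Q_def using F x(1) by (intro member_le_sum) auto
    finally show ?thesis .
  qed
  define m where "m = Inf (Q ` K)"
  have bdd: "bdd_below (Q ` K)" using Qge by (auto intro!: bdd_belowI[of _ "e^2"])
  have mge: "e^2 \<le> m" unfolding m_def using K(2) Qge by (intro cInf_greatest) auto
  have mpos: "m > 0" using mge e by (smt (verit) zero_less_power)
  have mle: "m \<le> Q c" if "c \<in> K" for c unfolding m_def using bdd that by (intro cInf_lower) auto
  define D2 where "D2 = (\<Sum>x\<in>F. (2 * M * norm x)^2)"
  have D2: "(\<Sum>x\<in>F. (blinfun_apply c x - blinfun_apply k x)^2) \<le> D2" if "c \<in> K" "k \<in> K" for c k
    unfolding D2_def
  proof (rule sum_mono)
    fix x assume "x \<in> F"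
    have "\<bar>blinfun_apply c x - blinfun_apply k x\<bar> = \<bar>blinfun_apply (c - k) x\<bar>" by (simp add: blinfun.diff_left)
    also have "\<dots> \<le> norm (c - k) * norm x" using norm_blinfun[of "c - k" x] by simp
    also have "\<dots> \<le> (norm c + norm k) * norm x" by (intro mult_right_mono norm_triangle_ineq4) auto
    also have "\<dots> \<le> (2 * M) * norm x" using M[OF that(1)] M[OF that(2)] by (intro mult_right_mono) auto
    finally have "\<bar>blinfun_apply c x - blinfun_apply k x\<bar> \<le> 2 * M * norm x" .
    then show "(blinfun_apply c x - blinfun_apply k x)^2 \<le> (2 * M * norm x)^2"
      by (metis abs_ge_zero power2_abs power_mono)
  qed
  have D2nn: "D2 \<ge> 0" unfolding D2_def by (simp add: sum_nonneg)
  define t where "t = min 1 (m / (2 * (D2 + 1)))"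
  have t: "t > 0" "t \<le> 1" "t * D2 \<le> m / 2"
  proof -
    show "t > 0" unfolding t_def using mpos D2nn by simp
    show "t \<le> 1" unfolding t_def by simp
    have "t * D2 \<le> m / (2 * (D2 + 1)) * D2" unfolding t_def using D2nn by (intro mult_right_mono) auto
    also have "\<dots> \<le> m / 2"
      using D2nn mpos by (simp add: field_simps)
    finally show "t * D2 \<le> m / 2" .
  qed
  obtain k where k: "k \<in> K" "Q k < m + t * m / 2"
    using cInf_lessD[of "Q ` K" "m + t * m / 2"] K(2) t mpos unfolding m_def[symmetric] by auto
  define w where "w = (\<Sum>x\<in>F. (blinfun_apply p x - blinfun_apply k x) *\<^sub>R x)"
  have app: "blinfun_apply c w = (\<Sum>x\<in>F. (blinfun_apply p x - blinfun_apply k x) * blinfun_apply c x)" for c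
    unfolding w_def by (simp add: blinfun.sum_right blinfun.scaleR_right)
  show ?thesis
  proof (intro exI conjI ballI)
    show "m / 2 > 0" using mpos by simp
  next
    fix c assume c: "c \<in> K"
    define A where "A = (\<Sum>x\<in>F. (blinfun_apply k x - blinfun_apply p x) * (blinfun_apply c x - blinfun_apply k x))"
    define S2 where "S2 = (\<Sum>x\<in>F. (blinfun_apply c x - blinfun_apply k x)^2)"
    have ct: "(1 - t) *\<^sub>R k + t *\<^sub>R c \<in> K" using K(1) k(1) c t by (intro convexD) auto
    have "Q ((1 - t) *\<^sub>R k + t *\<^sub>R c) = (\<Sum>x\<in>F. (blinfun_apply k x - blinfun_apply p x)^2
        + 2 * t * ((blinfun_apply k x - blinfun_apply p x) * (blinfun_apply c x - blinfun_apply k x))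
        + t^2 * (blinfun_apply c x - blinfun_apply k x)^2)"
    proof -
      have ev: "blinfun_apply ((1 - t) *\<^sub>R k + t *\<^sub>R c) x = blinfun_apply k x + t * (blinfun_apply c x - blinfun_apply k x)" for x
        by (simp add: blinfun.add_left blinfun.scaleR_left) (simp add: algebra_simps)
      show ?thesis unfolding Q_def ev by (intro sum.cong refl) (simp add: power2_eq_square algebra_simps)
    qed
    also have "\<dots> = Q k + 2 * t * A + t^2 * S2"
      unfolding Q_def A_def S2_def by (simp add: sum.distrib sum_distrib_left)
    finally have Qct: "Q ((1 - t) *\<^sub>R k + t *\<^sub>R c) = Q k + 2 * t * A + t^2 * S2" .
    have S2: "S2 \<le> D2" unfolding S2_def using D2 c k(1) by blast
    have "m \<le> Q k + 2 * t * A + t^2 * S2" using mle[OF ct] Qct by simp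
    also have "\<dots> < m + t * m / 2 + 2 * t * A + t^2 * D2"
      using k(2) S2 t(1) by (smt (verit) mult_left_mono zero_le_power)
    finally have "0 < t * (m / 2 + 2 * A + t * D2)" by (simp add: algebra_simps power2_eq_square)
    then have "0 < m / 2 + 2 * A + t * D2" using t(1) by (simp add: zero_less_mult_iff)
    then have Agt: "A > - m / 2" using t(3) by linarith
    have "blinfun_apply p w - blinfun_apply c w = Q k + A"
      unfolding app A_def Q_def
      by (simp add: sum_subtractf[symmetric] sum.distrib[symmetric] power2_eq_square sum_distrib_left app[of p] algebra_simps)
    then show "blinfun_apply c w \<le> blinfun_apply p w - m / 2"
      using Agt mle[OF k(1)] by linarith
  qed
qed



definition Dset :: "('a::real_normed_vector \<times> ('a \<Rightarrow>\<^sub>L real)) set \<Rightarrow> ('a \<Rightarrow>\<^sub>L real) set" where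
  "Dset G = {xs. \<exists>B. \<forall>(z, zs)\<in>G. blinfun_apply (xs - zs) z \<le> B}"

lemma fitz_snd:
  fixes G :: "('a::real_normed_vector \<times> ('a \<Rightarrow>\<^sub>L real)) set"
  assumes M: "\<And>zs. zs \<in> snd ` G \<Longrightarrow> norm zs \<le> M"
  shows "snd ` fitz_dom G = Dset G"
proof safe
  fix x xs assume "(x, xs) \<in> fitz_dom G"
  then obtain B where B: "\<forall>(z, zs)\<in>G. blinfun_apply (xs - zs) (z - x) \<le> B"
    unfolding fitz_dom_iff by blast
  have "\<forall>(z, zs)\<in>G. blinfun_apply (xs - zs) z \<le> B + (norm xs + M) * norm x"
  proof clarify
    fix z zs assume zG: "(z, zs) \<in> G"
    have zR: "zs \<in> snd ` G" using zG by force
    have "blinfun_apply (xs - zs) x \<le> norm (xs - zs) * norm x"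
      using norm_blinfun[of "xs - zs" x] by simp
    also have "\<dots> \<le> (norm xs + M) * norm x"
      using norm_triangle_ineq4[of xs zs] M[OF zR] by (intro mult_right_mono) auto
    finally have "blinfun_apply (xs - zs) x \<le> (norm xs + M) * norm x" .
    moreover have "blinfun_apply (xs - zs) (z - x) \<le> B" using B zG by force
    ultimately show "blinfun_apply (xs - zs) z \<le> B + (norm xs + M) * norm x"
      by (simp add: blinfun.diff_right)
  qed
  then show "snd (x, xs) \<in> Dset G" unfolding Dset_def by auto
next
  fix xs assume "xs \<in> Dset G"
  then have "(0, xs) \<in> fitz_dom G" unfolding Dset_def fitz_dom_iff by simp
  then show "xs \<in> snd ` fitz_dom G" by force
qed


lemma R_sub_D:
  fixes G :: "('a::real_normed_vector \<times> ('a \<Rightarrow>\<^sub>L real)) set"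
  assumes "monotone_op G" and M: "\<And>zs. zs \<in> snd ` G \<Longrightarrow> norm zs \<le> M"
  shows "snd ` G \<subseteq> Dset G"
proof clarify
  fix z0 zs0 assume z0: "(z0, zs0) \<in> G"
  have "\<forall>(z, zs)\<in>G. blinfun_apply (zs0 - zs) z \<le> (norm zs0 + M) * norm z0"
  proof clarify
    fix z zs assume zG: "(z, zs) \<in> G"
    have zR: "zs \<in> snd ` G" using zG by force
    have "blinfun_apply (zs0 - zs) (z0 - z) \<ge> 0"
      using assms(1) z0 zG unfolding monotone_op_def by fastforce
    then have "blinfun_apply (zs0 - zs) z \<le> blinfun_apply (zs0 - zs) z0"
      by (simp add: blinfun.diff_right)
    also have "\<dots> \<le> norm (zs0 - zs) * norm z0" using norm_blinfun[of "zs0 - zs" z0] by simp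
    also have "\<dots> \<le> (norm zs0 + M) * norm z0"
      using norm_triangle_ineq4[of zs0 zs] M[OF zR] by (intro mult_right_mono) auto
    finally show "blinfun_apply (zs0 - zs) z \<le> (norm zs0 + M) * norm z0" .
  qed
  then show "snd (z0, zs0) \<in> Dset G" unfolding Dset_def by auto
qed

lemma D_convex: "convex (Dset G)"
proof (rule convexI)
  fix a b :: "'a \<Rightarrow>\<^sub>L real" and u v :: real
  assume a: "a \<in> Dset G" and b: "b \<in> Dset G" and uv: "0 \<le> u" "0 \<le> v" "u + v = 1"
  obtain A where A: "\<forall>(z, zs)\<in>G. blinfun_apply (a - zs) z \<le> A" using a unfolding Dset_def by blast
  obtain B where B: "\<forall>(z, zs)\<in>G. blinfun_apply (b - zs) z \<le> B" using b unfolding Dset_def by blast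
  have "\<forall>(z, zs)\<in>G. blinfun_apply (u *\<^sub>R a + v *\<^sub>R b - zs) z \<le> u * A + v * B"
  proof clarify
    fix z zs assume zG: "(z, zs) \<in> G"
    have e: "blinfun_apply (u *\<^sub>R a + v *\<^sub>R b - zs) z
        = u * blinfun_apply (a - zs) z + v * blinfun_apply (b - zs) z"
    proof -
      have "blinfun_apply (u *\<^sub>R a + v *\<^sub>R b - zs) z = u * blinfun_apply a z + v * blinfun_apply b z - blinfun_apply zs z"
        by (simp add: blinfun.add_left blinfun.diff_left blinfun.scaleR_left)
      also have "\<dots> = u * blinfun_apply (a - zs) z + v * blinfun_apply (b - zs) z"
        using uv(3) by (simp add: blinfun.diff_left algebra_simps flip: distrib_right)
      finally show ?thesis .
    qed
    have "blinfun_apply (a - zs) z \<le> A" "blinfun_apply (b - zs) z \<le> B" using A B zG by force+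
    then show "blinfun_apply (u *\<^sub>R a + v *\<^sub>R b - zs) z \<le> u * A + v * B"
      unfolding e using uv by (intro add_mono mult_left_mono) auto
  qed
  then show "u *\<^sub>R a + v *\<^sub>R b \<in> Dset G" unfolding Dset_def by blast
qed

lemma key:
  fixes G :: "('a::real_normed_vector \<times> ('a \<Rightarrow>\<^sub>L real)) set"
  assumes M: "\<And>zs. zs \<in> snd ` G \<Longrightarrow> norm zs \<le> M"
    and xs: "xs \<notin> closure (snd ` G)"
  shows "(SUP (z, zs)\<in>G. ereal (blinfun_apply (xs - zs) z / norm (xs - zs))) = \<infinity>
    \<longleftrightarrow> xs \<notin> Dset G"
proof -
  obtain d where d: "d > 0" "\<And>zs. zs \<in> snd ` G \<Longrightarrow> \<not> dist zs xs < d"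
    using xs unfolding closure_approachable by blast
  have d2: "d \<le> norm (xs - zs)" if "zs \<in> snd ` G" for zs
    using d(2)[OF that] by (simp add: dist_norm norm_minus_commute)
  show ?thesis unfolding Dset_def using ratio_sup_iff[OF M d(1) d2] by auto
qed
theorem theorem1p6:
  fixes G :: "('a::banach \<times> ('a \<Rightarrow>\<^sub>L real)) set"
  defines "R \<equiv> snd ` G"
  defines "ci \<equiv> (\<forall>xs. xs \<notin> closure R \<longrightarrow>
      (SUP (z, zs)\<in>G. ereal (blinfun_apply (xs - zs) z / norm (xs - zs))) = \<infinity>)"
  defines "cii \<equiv> snd ` fitz_dom G \<subseteq> closure R"
  defines "ciii \<equiv> closure R = closure (convex hull R) \<and>
      closure (convex hull R) = closure (snd ` fitz_dom G)"
  defines "civ \<equiv> convex (closure R)"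
  defines "ci' \<equiv> (\<forall>xs. xs \<notin> weak_star_closure R \<longrightarrow>
      (SUP (z, zs)\<in>G. ereal (blinfun_apply (xs - zs) z / norm (xs - zs))) = \<infinity>)"
  defines "cii' \<equiv> snd ` fitz_dom G \<subseteq> weak_star_closure R"
  defines "ciii' \<equiv> weak_star_closure R = weak_star_closure (convex hull R) \<and>
      weak_star_closure (convex hull R) = weak_star_closure (snd ` fitz_dom G)"
  defines "civ' \<equiv> convex (weak_star_closure R)"
  assumes mono: "monotone_op G"
    and bdd: "bounded R"
  shows "(ci \<longleftrightarrow> cii) \<and> (cii \<longleftrightarrow> ciii)
    \<and> (ciii \<longrightarrow> civ) \<and> (civ \<longrightarrow> civ')
    \<and> (ci \<longrightarrow> ci')
    \<and> (cii \<longrightarrow> cii') \<and> (cii' \<longrightarrow> ciii') \<and> (ciii' \<longrightarrow> ci')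
    \<and> (ciii' \<longrightarrow> civ')
    \<and> (maximal_monotone_op G \<longrightarrow> civ' \<longrightarrow> ci')"
proof -
  obtain M where M: "\<And>zs. zs \<in> R \<Longrightarrow> norm zs \<le> M"
    using bdd unfolding bounded_iff by blast
  define D where "D = Dset G"
  have fitz: "snd ` fitz_dom G = D" unfolding D_def by (rule fitz_snd) (use M R_def in auto)
  have RD: "R \<subseteq> D" unfolding D_def R_def by (rule R_sub_D[OF mono]) (use M R_def in auto)
  have cD: "convex D" unfolding D_def by (rule D_convex)
  have hD: "convex hull R \<subseteq> D" using RD cD by (rule hull_minimal)
  have Rh: "R \<subseteq> convex hull R" by (rule hull_subset)
  have keyR: "\<And>xs. xs \<notin> closure R \<Longrightarrow>
      (SUP (z, zs)\<in>G. ereal (blinfun_apply (xs - zs) z / norm (xs - zs))) = \<infinity> \<longleftrightarrow> xs \<notin> D"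
    unfolding D_def R_def by (rule key) (use M R_def in auto)
  have clw: "closure R \<subseteq> weak_star_closure R" by (rule closure_sub_ws)
  have ci_eq: "ci \<longleftrightarrow> D \<subseteq> closure R" unfolding ci_def using keyR by blast
  have ci'_eq: "ci' \<longleftrightarrow> D \<subseteq> weak_star_closure R" unfolding ci'_def using keyR clw by blast
  have cii_eq: "cii \<longleftrightarrow> D \<subseteq> closure R" unfolding cii_def fitz ..
  have cii'_eq: "cii' \<longleftrightarrow> D \<subseteq> weak_star_closure R" unfolding cii'_def fitz ..
  have ciii_eq: "ciii \<longleftrightarrow> closure R = closure (convex hull R) \<and> closure (convex hull R) = closure D"
    unfolding ciii_def fitz ..
  have ciii'_eq: "ciii' \<longleftrightarrow> weak_star_closure R = weak_star_closure (convex hull R) \<and>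
      weak_star_closure (convex hull R) = weak_star_closure D"
    unfolding ciii'_def fitz ..
  have A1: "cii \<longleftrightarrow> ciii"
  proof
    assume "cii"
    then have "D \<subseteq> closure R" using cii_eq by simp
    then have "closure D \<subseteq> closure R" by (metis closure_closure closure_mono)
    moreover have "closure R \<subseteq> closure (convex hull R)" using Rh by (rule closure_mono)
    moreover have "closure (convex hull R) \<subseteq> closure D" using hD by (rule closure_mono)
    ultimately show ciii unfolding ciii_eq by blast
  next
    assume ciii
    then show cii unfolding cii_eq ciii_eq using closure_subset[of D] by blast
  qed
  have A2: "cii' \<longrightarrow> ciii'"
  proof
    assume "cii'"
    then have "D \<subseteq> weak_star_closure R" using cii'_eq by simp
    then have "weak_star_closure D \<subseteq> weak_star_closure R" by (metis ws_idem ws_mono)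
    moreover have "weak_star_closure R \<subseteq> weak_star_closure (convex hull R)" using Rh by (rule ws_mono)
    moreover have "weak_star_closure (convex hull R) \<subseteq> weak_star_closure D" using hD by (rule ws_mono)
    ultimately show ciii' unfolding ciii'_eq by blast
  qed
  have A3: "ciii' \<longrightarrow> ci'"
    unfolding ciii'_eq ci'_eq using ws_subset[of D] by blast
  have A4: "ciii \<longrightarrow> civ" unfolding ciii_eq civ_def
    by (metis convex_closure convex_convex_hull)
  have A5: "ciii' \<longrightarrow> civ'" unfolding ciii'_eq civ'_def
    by (metis ws_convex convex_convex_hull)
  have A6: "civ \<longrightarrow> civ'"
  proof
    assume civ
    have "weak_star_closure R = weak_star_closure (closure R)"
    proof
      show "weak_star_closure R \<subseteq> weak_star_closure (closure R)" by (rule ws_mono[OF closure_subset])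
      show "weak_star_closure (closure R) \<subseteq> weak_star_closure R" using ws_mono[OF clw] by (simp add: ws_idem)
    qed
    then show civ' unfolding civ'_def using ws_convex \<open>civ\<close> civ_def by metis
  qed
  have A7: "maximal_monotone_op G \<longrightarrow> civ' \<longrightarrow> ci'"
  proof (intro impI)
    assume mm: "maximal_monotone_op G" and cv: civ'
    show ci' unfolding ci'_eq
    proof
      fix xs assume xsD: "xs \<in> D"
      show "xs \<in> weak_star_closure R"
      proof (rule ccontr)
        assume xs: "xs \<notin> weak_star_closure R"
        have Gne: "G \<noteq> {}"
        proof
          assume "G = {}"
          have "monotone_op {(0::'a, 0::'a \<Rightarrow>\<^sub>L real)}" unfolding monotone_op_def by simp
          then show False using mm \<open>G = {}\<close> unfolding maximal_monotone_op_def by blast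
        qed
        have hw: "convex hull R \<subseteq> weak_star_closure R"
          using ws_subset[of R] cv unfolding civ'_def by (rule hull_minimal)
        have "weak_star_closure (convex hull R) \<subseteq> weak_star_closure R"
          using ws_mono[OF hw] by (simp add: ws_idem)
        then have "xs \<notin> weak_star_closure (convex hull R)" using xs by blast
        then obtain F e where Fe: "finite F" "e > 0"
          "\<And>s. s \<in> convex hull R \<Longrightarrow> \<exists>x\<in>F. e \<le> \<bar>blinfun_apply s x - blinfun_apply xs x\<bar>"
          unfolding ws_closure_iff by (metis not_less)
        have hM: "convex hull R \<subseteq> cball 0 M"
          by (rule hull_minimal) (use M in auto)
        obtain w \<delta> where w: "\<delta> > 0" "\<And>c. c \<in> convex hull R \<Longrightarrow> blinfun_apply c w \<le> blinfun_apply xs w - \<delta>"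
        proof -
          have "\<exists>w \<delta>. \<delta> > 0 \<and> (\<forall>c\<in>convex hull R. blinfun_apply c w \<le> blinfun_apply xs w - \<delta>)"
          proof (rule sep_lemma[where K="convex hull R" and M=M and p=xs and F=F and e=e])
            show "convex hull R \<noteq> {}" using Gne R_def by simp
            show "\<And>c. c \<in> convex hull R \<Longrightarrow> norm c \<le> M" using hM by auto
          qed (use Fe in auto)
          then show ?thesis using that by blast
        qed
        obtain B where B: "\<forall>(z, zs)\<in>G. blinfun_apply (xs - zs) z \<le> B"
          using xsD unfolding D_def Dset_def by blast
        define t where "t = (\<bar>B\<bar> + 1) / \<delta>"
        have pos: "blinfun_apply (xs - zs) (t *\<^sub>R w - z) \<ge> 0" if zG: "(z, zs) \<in> G" for z zs
        proof -
          have "zs \<in> convex hull R" using zG Rh R_def by force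
          then have "\<delta> \<le> blinfun_apply xs w - blinfun_apply zs w" using w(2)[of zs] by linarith
          then have "t * \<delta> \<le> t * (blinfun_apply xs w - blinfun_apply zs w)"
            using w(1) unfolding t_def by (intro mult_left_mono) auto
          moreover have "t * \<delta> = \<bar>B\<bar> + 1" unfolding t_def using w(1) by simp
          moreover have "blinfun_apply (xs - zs) z \<le> B" using B zG by force
          ultimately show ?thesis
            by (simp add: blinfun.diff_right blinfun.scaleR_right blinfun.diff_left algebra_simps)
        qed
        have "monotone_op (insert (t *\<^sub>R w, xs) G)"
          unfolding monotone_op_def
        proof (intro ballI, clarify)
          fix a as b bs assume a: "(a, as) \<in> insert (t *\<^sub>R w, xs) G" and b: "(b, bs) \<in> insert (t *\<^sub>R w, xs) G"
          have sym: "blinfun_apply (bs - as) (b - a) = blinfun_apply (as - bs) (a - b)"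
            by (simp add: blinfun.diff_right blinfun.diff_left algebra_simps)
          from a b show "0 \<le> blinfun_apply (as - bs) (a - b)"
          proof (elim insertE)
            assume "(a, as) \<in> G" "(b, bs) \<in> G"
            then show ?thesis using mono unfolding monotone_op_def by fastforce
          next
            assume "(a, as) = (t *\<^sub>R w, xs)" "(b, bs) \<in> G"
            then show ?thesis using pos by auto
          next
            assume "(a, as) \<in> G" "(b, bs) = (t *\<^sub>R w, xs)"
            then show ?thesis using pos[of a as] sym by auto
          qed auto
        qed
        then have "insert (t *\<^sub>R w, xs) G = G" using mm unfolding maximal_monotone_op_def by blast
        then have "xs \<in> R" unfolding R_def by force
        then show False using xs ws_subset by blast
      qed
    qed
  qed
  show ?thesis
    using A1 A2 A3 A4 A5 A6 A7 ci_eq ci'_eq cii_eq cii'_eq clw by blast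
qed

end
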